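(* Let $Q = I \times J \subset \mathbb{W}$ be a rectangle and let $F \colon Q \to \mathbb{W}$ be a horizontal $(M,\epsilon)$-quasi-isometric embedding. Let $w_{1} = (y_{1},t_{1}), w_{2} = (y_{2},t_{2}) \in Q$ satisfy $|y_{2}-y_{1}| > \max\{8M\epsilon, 4M^{2}\|t_{1}-t_{2}\|\}$. Then $|\pi_{1}(F(w_{2})) - \pi_{1}(F(w_{1}))| \geq \frac{|y_{2}-y_{1}|}{2M}$.
   Context: $\mathbb{W}$ is $\mathbb{R}^{2}$ with the metric $d_{\mathrm{par}}((y,t),(\xi,\tau)) = \max\{|y-\xi|,|t-\tau|^{1/2}\}$; $\pi_{1}(y,t) = y$; horizontal lines in $\mathbb{W}$ are the sets $\mathbb{R} \times \{t\}$; $\|t_{1}-t_{2}\| := \sqrt{|t_{1}-t_{2}|}$. A map $F \colon (X,d) \to (Y,d')$ is an $(M,\epsilon)$-quasi-isometric embedding if $M^{-1}d(x,y) - \epsilon \leq d'(F(x),F(y)) \leq Md(x,y) + \epsilon$ for all $x,y$. $F \colon I \times J \to \mathbb{W}$ is a horizontal $(M,\epsilon)$-quasi-isometric embedding if it is an $(M,\epsilon)$-quasi-isometric embedding w.r.t. $d_{\mathrm{par}}$ and for every $t \in J$ there is a horizontal line $\ell_{t} \subset \mathbb{W}$ with $F(I \times \{t\}) \subset \ell_{t}$. *)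

theory Defs
  imports "HOL-Analysis.Analysis"
begin

text \<open>Points of the parabolic plane W = R^2 are pairs (y,t).\<close>

definition d_par :: "real \<times> real \<Rightarrow> real \<times> real \<Rightarrow> real" where
  "d_par p q = max \<bar>fst p - fst q\<bar> (sqrt \<bar>snd p - snd q\<bar>)"

definition pi1 :: "real \<times> real \<Rightarrow> real" where
  "pi1 p = fst p"

definition pnorm :: "real \<Rightarrow> real \<Rightarrow> real" where
  "pnorm t1 t2 = sqrt \<bar>t1 - t2\<bar>"

definition horizontal_line :: "(real \<times> real) set \<Rightarrow> bool" where
  "horizontal_line L \<longleftrightarrow> (\<exists>t. L = UNIV \<times> {t})"

definition qi_embedding_on ::
  "(real \<times> real) set \<Rightarrow> real \<Rightarrow> real \<Rightarrow> (real \<times> real \<Rightarrow> real \<times> real) \<Rightarrow> bool" where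
  "qi_embedding_on S M eps F \<longleftrightarrow>
     (\<forall>x\<in>S. \<forall>y\<in>S. d_par x y / M - eps \<le> d_par (F x) (F y)
                     \<and> d_par (F x) (F y) \<le> M * d_par x y + eps)"

definition horizontal_qi_embedding ::
  "real set \<Rightarrow> real set \<Rightarrow> real \<Rightarrow> real \<Rightarrow> (real \<times> real \<Rightarrow> real \<times> real) \<Rightarrow> bool" where
  "horizontal_qi_embedding I J M eps F \<longleftrightarrow>
     qi_embedding_on (I \<times> J) M eps F \<and>
     (\<forall>t\<in>J. \<exists>L. horizontal_line L \<and> F ` (I \<times> {t}) \<subseteq> L)"

end

theory Submission
  imports Defs
begin

theorem lemma3p18:
  fixes I J :: "real set" and M eps y1 t1 y2 t2 :: real
    and F :: "real \<times> real \<Rightarrow> real \<times> real"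
  assumes "is_interval I" and "is_interval J"
    and "horizontal_qi_embedding I J M eps F"
    and "(y1, t1) \<in> I \<times> J" and "(y2, t2) \<in> I \<times> J"
    and "\<bar>y2 - y1\<bar> > max (8 * M * eps) (4 * M\<^sup>2 * pnorm t1 t2)"
  shows "\<bar>pi1 (F (y2, t2)) - pi1 (F (y1, t1))\<bar> \<ge> \<bar>y2 - y1\<bar> / (2 * M)"
proof (cases "M > 0")
  case False
  then have "\<bar>y2 - y1\<bar> / (2 * M) \<le> 0"
    by (simp add: divide_nonneg_nonpos)
  then show ?thesis by (smt (verit) abs_ge_zero)
next
  case Mpos: True
  define d where "d = \<bar>y2 - y1\<bar>"
  define s where "s = pnorm t1 t2"
  have s0: "s \<ge> 0" unfolding s_def pnorm_def by simp
  have w3: "(y2, t1) \<in> I \<times> J" using assms(4,5) by auto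
  have qi: "qi_embedding_on (I \<times> J) M eps F"
   and hor: "\<forall>t\<in>J. \<exists>L. horizontal_line L \<and> F ` (I \<times> {t}) \<subseteq> L"
    using assms(3) unfolding horizontal_qi_embedding_def by auto
  have t1J: "t1 \<in> J" and y1I: "y1 \<in> I" and y2I: "y2 \<in> I" using assms(4,5) by auto
  obtain L where "horizontal_line L" "F ` (I \<times> {t1}) \<subseteq> L" using hor t1J by blast
  then obtain c where c: "F ` (I \<times> {t1}) \<subseteq> UNIV \<times> {c}" unfolding horizontal_line_def by auto
  have "F (y1,t1) \<in> UNIV \<times> {c}" "F (y2,t1) \<in> UNIV \<times> {c}" using c y1I y2I by auto
  then have sn: "snd (F (y1,t1)) = snd (F (y2,t1))" by auto
  have l1: "d_par (y2,t1) (y1,t1) / M - eps \<le> d_par (F (y2,t1)) (F (y1,t1))"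
    using qi w3 assms(4) unfolding qi_embedding_on_def by blast
  have dp1: "d_par (y2,t1) (y1,t1) = d" unfolding d_par_def d_def by simp
  have dp1': "d_par (F (y2,t1)) (F (y1,t1)) = \<bar>pi1 (F (y2,t1)) - pi1 (F (y1,t1))\<bar>"
    unfolding d_par_def pi1_def using sn by simp
  have l2: "d_par (F (y2,t2)) (F (y2,t1)) \<le> M * d_par (y2,t2) (y2,t1) + eps"
    using qi w3 assms(5) unfolding qi_embedding_on_def by blast
  have dp2: "d_par (y2,t2) (y2,t1) = s" unfolding d_par_def s_def pnorm_def
    by (simp add: abs_minus_commute)
  have dp2': "\<bar>pi1 (F (y2,t2)) - pi1 (F (y2,t1))\<bar> \<le> d_par (F (y2,t2)) (F (y2,t1))"
    unfolding d_par_def pi1_def by simp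
  have A: "\<bar>pi1 (F (y2,t1)) - pi1 (F (y1,t1))\<bar> \<ge> d / M - eps" using l1 dp1 dp1' by simp
  have B: "\<bar>pi1 (F (y2,t2)) - pi1 (F (y2,t1))\<bar> \<le> M * s + eps" using l2 dp2 dp2' by simp
  have h: "d > 8 * M * eps" "d > 4 * M\<^sup>2 * s" using assms(6) unfolding d_def s_def by auto
  have e: "2 * eps < d / (4 * M)" using h(1) Mpos by (simp add: field_simps)
  have f: "M * s < d / (4 * M)" using h(2) Mpos by (simp add: field_simps power2_eq_square)
  have g: "d / M - d / (4*M) - d / (4*M) = d / (2*M)" using Mpos by (simp add: field_simps)
  have "\<bar>pi1 (F (y2, t2)) - pi1 (F (y1, t1))\<bar> \<ge> d / M - eps - (M * s + eps)"
    using A B by linarith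
  then show ?thesis using e f g unfolding d_def[symmetric] by linarith
qed

end
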